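(* Let $n\ge 2$ and let $(W_r)_{r\in\mathbb Z}$ be a generalized $n$-step Fibonacci sequence. Then for every integer $r$ and every non-negative integer $k$, \[ \sum_{j=0}^k(-1)^jW_{r-k+j}+(n\bmod 2)\sum_{j=0}^k(-1)^jW_{r-k-n-1+j} =(-1)^k\sum_{j=1}^{\lceil n/2\rceil}W_{r-2j+1}+\sum_{j=1}^{\lceil n/2\rceil}W_{r-2j-k}. \]
   Context: Fix an integer $n\ge 2$. A generalized $n$-step Fibonacci sequence is a two-sided sequence $(W_r)_{r\in\mathbb Z}$ of complex numbers satisfying $W_r=\sum_{i=1}^n W_{r-i}$ for all $r\in\mathbb Z$. $\lceil q\rceil$ denotes the least integer $\ge q$, and $n\bmod 2\in\{0,1\}$. *)

theory Defs
  imports Complex_Main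
begin

definition gen_fib :: "nat \<Rightarrow> (int \<Rightarrow> complex) \<Rightarrow> bool" where
  "gen_fib n W \<longleftrightarrow> (\<forall>r::int. W r = (\<Sum>i=1..n. W (r - int i)))"

end

theory Submission
  imports Defs
begin

lemma pair_sum:
  fixes W :: "int \<Rightarrow> complex"
  shows "(\<Sum>j=1..m. W (s - 2 * int j + 1) + W (s - 2 * int j)) = (\<Sum>i=1..2*m. W (s - int i))"
proof (induction m)
  case 0 then show ?case by simp
next
  case (Suc m)
  have e: "2 * Suc m = Suc (Suc (2*m))" by simp
  show ?case unfolding e using Suc
    by (simp add: algebra_simps)
qed

lemma key:
  fixes W :: "int \<Rightarrow> complex"
  assumes g: "gen_fib n W"
  shows "(\<Sum>i=1..n + n mod 2. W (s - int i)) = W s + of_nat (n mod 2) * W (s - int n - 1)"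
proof -
  have ws: "(\<Sum>i=1..n. W (s - int i)) = W s" using g unfolding gen_fib_def by metis
  show ?thesis
  proof (cases "n mod 2 = 0")
    case True
    then show ?thesis using ws by simp
  next
    case False
    then have e: "n mod 2 = 1" by simp
    have "(\<Sum>i=1..n + 1. W (s - int i)) = (\<Sum>i=1..n. W (s - int i)) + W (s - int n - 1)"
      by (simp add: algebra_simps)
    then show ?thesis using ws e by simp
  qed
qed

lemma mult_minus1: "(-1::complex) * x = - x" by simp

theorem mainTheorem4:
  fixes n :: nat and W :: "int \<Rightarrow> complex" and r :: int and k :: nat
  assumes "n \<ge> 2" and "gen_fib n W"
  shows "(\<Sum>j=0..k. (-1)^j * W (r - int k + int j))
         + of_nat (n mod 2) * (\<Sum>j=0..k. (-1)^j * W (r - int k - int n - 1 + int j))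
       = (-1)^k * (\<Sum>j=1..nat \<lceil>real n / 2\<rceil>. W (r - 2 * int j + 1))
         + (\<Sum>j=1..nat \<lceil>real n / 2\<rceil>. W (r - 2 * int j - int k))"
proof -
  define m where "m = nat \<lceil>real n / 2\<rceil>"
  have m2: "2 * m = n + n mod 2"
  proof (cases "even n")
    case True
    then obtain t where "n = 2*t" by blast
    then show ?thesis unfolding m_def by simp
  next
    case False
    then obtain t where t: "n = 2*t+1" using oddE by blast
    have "\<lceil>real n / 2\<rceil> = int t + 1" unfolding t by (simp add: ceiling_eq_iff)
    then show ?thesis unfolding m_def using t by simp
  qed
  have K: "(\<Sum>j=1..m. W (s - 2 * int j + 1)) + (\<Sum>j=1..m. W (s - 2 * int j))
        = W s + of_nat (n mod 2) * W (s - int n - 1)" for s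
    using pair_sum[of W s m] key[OF assms(2), of s] m2 by (simp add: sum.distrib)
  have "(\<Sum>j=0..k. (-1)^j * W (r - int k + int j))
         + of_nat (n mod 2) * (\<Sum>j=0..k. (-1)^j * W (r - int k - int n - 1 + int j))
       = (-1)^k * (\<Sum>j=1..m. W (r - 2 * int j + 1))
         + (\<Sum>j=1..m. W (r - 2 * int j - int k))"
  proof (induction k)
    case 0
    then show ?case using K[of r] by simp
  next
    case (Suc k)
    have A: "(\<Sum>j=0..Suc k. (-1)^j * W (r - int (Suc k) + int j))
        = W (r - int k - 1) - (\<Sum>j=0..k. (-1)^j * W (r - int k + int j))"
      by (subst sum.atLeast0_atMost_Suc_shift) (simp add: sum_negf algebra_simps)
    have B: "(\<Sum>j=0..Suc k. (-1)^j * W (r - int (Suc k) - int n - 1 + int j))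
        = W (r - int k - 1 - int n - 1) - (\<Sum>j=0..k. (-1)^j * W (r - int k - int n - 1 + int j))"
      by (subst sum.atLeast0_atMost_Suc_shift) (simp add: sum_negf algebra_simps)
    have C: "(\<Sum>j=1..m. W (r - 2 * int j - int k))
        = W (r - int k - 1) + of_nat (n mod 2) * W (r - int k - 1 - int n - 1)
          - (\<Sum>j=1..m. W (r - 2 * int j - int (Suc k)))"
      using K[of "r - int k - 1"] by (simp add: algebra_simps)
    have lin: "\<And>a b e p S T T' W1 W2 :: complex. a + e*b = p*S + T \<Longrightarrow> T = W1 + e*W2 - T'
       \<Longrightarrow> (W1 - a) + e*(W2-b) = (-p)*S + T'"
    proof -
      fix a b e p S T T' W1 W2 :: complex
      assume h1: "a + e*b = p*S + T" and h2: "T = W1 + e*W2 - T'"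
      have "(W1 - a) + e*(W2-b) = W1 + e*W2 - (a + e*b)" by (simp add: algebra_simps)
      also have "\<dots> = (-p)*S + T'" unfolding h1 h2 by simp
      finally show "(W1 - a) + e*(W2-b) = (-p)*S + T'" .
    qed
    show ?case unfolding A B power_Suc mult_minus1 by (rule lin[OF Suc.IH C])
  qed
  then show ?thesis unfolding m_def .
qed

end
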